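(* There is a numerical constant $c>0$ such that the following holds. Let $V$ be a real $2\pi$-periodic function with $\Vert V\Vert_0<\infty$ and $\widehat V(0)=0$, let $n\ge0$ and $l\ge0$ be integers with $2n+l\ge1$, and let $I_l:=\frac l2+[-\frac14,\frac14)$. Then for all $s_1<s_2$ in $I_l$, $$\Big\Vert\int_{s_1}^{s_2}P_n\,U_0(t)^\ast\,\mathbb{V}\,U_0(t)\,\mathbb{P}_{n,l}\,\Omega(t)\,dt\Big\Vert\le c\sqrt{1+\Vert V\Vert_0}\,\frac{|\widehat V(2n+l)|}{\sqrt{2n+l}},$$ where the norm is the operator norm on $L^2(\mathbb{Z})$.
   Context: $\widehat V(m):=\frac{1}{\sqrt{2\pi}}\int_0^{2\pi}e^{-imx}V(x)\,dx$, $\Vert V\Vert_0^2:=\sum_m|\widehat V(m)|^2$. On $L^2(\mathbb{Z})$: $\mathbb{V}$ is the convolution operator $(\mathbb{V}\psi)(m)=\frac{1}{\sqrt{2\pi}}\sum_{j}\widehat V(m-j)\psi(j)$; $E_m(t):=(m+t)^2$; $H_0(t)$ is multiplication by $E_m(t)$, i.e. $H_0(t)\psi(m)=E_m(t)\psi(m)$, and $H(t)=H_0(t)+\mathbb{V}$. $U_0(t)$ and $U(t)$ are the unitary propagators from time $0$ to $t$ generated by $H_0(t)$ and $H(t)$ ($i\partial_tU(t)=H(t)U(t)$, $U(0)=I$), and $\Omega(t):=U_0(t)^\ast U(t)$. $P_m$ is the orthogonal projection onto the site $m$, and $\mathbb{P}_{n,l}:=P_n+P_{-n-l}$. *)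

theory Defs
  imports "HOL-Analysis.Analysis"
begin

text \<open>Operators are functions vec => vec, only their behaviour on ell2 matters.\<close>

type_synonym vec = "int \<Rightarrow> complex"

definition ell2 :: "vec set" where
  "ell2 = {\<psi>. (\<lambda>m. (cmod (\<psi> m))\<^sup>2) summable_on UNIV}"

definition l2inner :: "vec \<Rightarrow> vec \<Rightarrow> complex" where
  "l2inner \<phi> \<psi> = (\<Sum>\<^sub>\<infinity>m. cnj (\<phi> m) * \<psi> m)"

definition l2norm :: "vec \<Rightarrow> real" where
  "l2norm \<psi> = sqrt (\<Sum>\<^sub>\<infinity>m. (cmod (\<psi> m))\<^sup>2)"

definition basis :: "int \<Rightarrow> vec" where
  "basis j = (\<lambda>m. if m = j then 1 else 0)"

definition unitary_op :: "(vec \<Rightarrow> vec) \<Rightarrow> bool" where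
  "unitary_op A \<longleftrightarrow> bij_betw A ell2 ell2 \<and>
     (\<forall>\<phi>\<in>ell2. \<forall>\<psi>\<in>ell2. l2inner (A \<phi>) (A \<psi>) = l2inner \<phi> \<psi>)"

definition adj :: "(vec \<Rightarrow> vec) \<Rightarrow> vec \<Rightarrow> vec" where
  "adj A \<psi> = (THE \<phi>. \<phi> \<in> ell2 \<and> (\<forall>w\<in>ell2. l2inner \<phi> w = l2inner \<psi> (A w)))"

definition Vhat :: "(real \<Rightarrow> real) \<Rightarrow> int \<Rightarrow> complex" where
  "Vhat V m = complex_of_real (1 / sqrt (2 * pi)) *
     integral {0..2*pi} (\<lambda>x. exp (- \<i> * of_int m * of_real x) * of_real (V x))"

definition norm0 :: "(real \<Rightarrow> real) \<Rightarrow> real" where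
  "norm0 V = sqrt (\<Sum>\<^sub>\<infinity>m. (cmod (Vhat V m))\<^sup>2)"

definition Vop :: "(real \<Rightarrow> real) \<Rightarrow> vec \<Rightarrow> vec" where
  "Vop V \<psi> = (\<lambda>m. complex_of_real (1 / sqrt (2 * pi)) * (\<Sum>\<^sub>\<infinity>j. Vhat V (m - j) * \<psi> j))"

definition Em :: "int \<Rightarrow> real \<Rightarrow> real" where
  "Em m t = (real_of_int m + t)\<^sup>2"

definition H0 :: "real \<Rightarrow> vec \<Rightarrow> vec" where
  "H0 t \<psi> = (\<lambda>m. complex_of_real (Em m t) * \<psi> m)"

definition Hop :: "(real \<Rightarrow> real) \<Rightarrow> real \<Rightarrow> vec \<Rightarrow> vec" where
  "Hop V t \<psi> = (\<lambda>m. H0 t \<psi> m + Vop V \<psi> m)"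

text \<open>U is the unitary propagator (from time 0 to t) generated by H:
  i d/dt U(t) = H(t) U(t), U(0) = I, the equation understood weakly against
  the basis vectors (which lie in the domain of H(t)):
  i d/dt <e_j, U(t) psi> = <H(t) e_j, U(t) psi>.\<close>
definition propagator :: "(real \<Rightarrow> vec \<Rightarrow> vec) \<Rightarrow> (real \<Rightarrow> vec \<Rightarrow> vec) \<Rightarrow> bool" where
  "propagator H U \<longleftrightarrow> (\<forall>t. unitary_op (U t)) \<and> (\<forall>\<psi>\<in>ell2. U 0 \<psi> = \<psi>) \<and>
     (\<forall>\<psi>\<in>ell2. \<forall>j t. ((\<lambda>s. U s \<psi> j) has_vector_derivative
         (- \<i> * l2inner (H t (basis j)) (U t \<psi>))) (at t))"

definition Pm :: "int \<Rightarrow> vec \<Rightarrow> vec" where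
  "Pm m \<psi> = (\<lambda>k. if k = m then \<psi> m else 0)"

definition Pnl :: "int \<Rightarrow> int \<Rightarrow> vec \<Rightarrow> vec" where
  "Pnl n l \<psi> = (\<lambda>k. Pm n \<psi> k + Pm (- n - l) \<psi> k)"

end

theory Submission
  imports Defs
begin

lemma phase_deriv:
  fixes N x0 t :: real
  shows "((\<lambda>s. exp (\<i> * of_real (N * (s - x0)\<^sup>2))) has_vector_derivative
          (\<i> * of_real (2 * N * (t - x0)) * exp (\<i> * of_real (N * (t - x0)\<^sup>2)))) (at t)"
proof -
  have "((\<lambda>z. exp (\<i> * (of_real N * (z - of_real x0)\<^sup>2))) has_field_derivative
          (exp (\<i> * (of_real N * (of_real t - of_real x0)\<^sup>2)) * (\<i> * (of_real N * (2 * (of_real t - of_real x0)))))) (at (of_real t))"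
    by (auto intro!: derivative_eq_intros)
  from has_vector_derivative_real_field[OF this]
  show ?thesis by (simp add: algebra_simps)
qed

lemma invd_deriv:
  fixes N x0 t :: real
  assumes "t \<noteq> x0" "N \<noteq> 0"
  shows "((\<lambda>s. 1 / (2 * \<i> * of_real N * of_real (s - x0))) has_vector_derivative
          (- 1 / (2 * \<i> * of_real N * (of_real (t - x0))\<^sup>2))) (at t)"
proof -
  have ne: "(of_real t - of_real x0) \<noteq> (0::complex)" "complex_of_real N \<noteq> 0"
    using assms by auto
  have "((\<lambda>z. 1 / (2 * \<i> * of_real N * (z - of_real x0))) has_field_derivative
          (- 1 / (2 * \<i> * of_real N * (of_real t - of_real x0)\<^sup>2))) (at (of_real t))"
    using ne by (auto intro!: derivative_eq_intros simp: divide_simps power2_eq_square)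
  from has_vector_derivative_real_field[OF this]
  show ?thesis by simp
qed

lemma cmod_of_real_diff[simp]: "cmod (complex_of_real t - complex_of_real x0) = \<bar>t - x0\<bar>"
  by (metis norm_of_real of_real_diff)

lemma inv_lin_deriv:
  fixes y N :: real
  assumes "y \<noteq> 0" "N \<noteq> 0"
  shows "((\<lambda>s. 1 / (2 * N * s)) has_real_derivative (- 1 / (2 * N * y\<^sup>2))) (at y)"
  using assms by (auto intro!: derivative_eq_intros simp: field_simps power2_eq_square)

lemma far_piece:
  fixes w w' :: "real \<Rightarrow> complex" and N x0 \<delta> K a b :: real
  assumes N: "N > 0" and dl: "\<delta> > 0" and K: "K \<ge> 0" and ab: "a < b"
    and side: "x0 + \<delta> \<le> a \<or> b \<le> x0 - \<delta>"
    and wd: "\<And>t. (w has_vector_derivative w' t) (at t)"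
    and w1: "\<And>t. norm (w t) \<le> 1" and wK: "\<And>t. norm (w' t) \<le> K"
  shows "norm (integral {a..b} (\<lambda>t. exp (\<i> * of_real (N * (t - x0)\<^sup>2)) * w t))
           \<le> 1 / (N * \<delta>) + K * (b - a) / (2 * N * \<delta>) + 1 / (2 * N * \<delta>)"
proof -
  define E where "E t = exp (\<i> * of_real (N * (t - x0)\<^sup>2))" for t
  define h where "h t = E t * w t" for t
  define D where "D t = 1 / (2 * \<i> * of_real N * of_real (t - x0))" for t
  define \<Phi> where "\<Phi> t = E t * w t * D t" for t
  define R where "R t = integral {a..t} h - \<Phi> t" for t
  define \<phi> where "\<phi> t = K * t / (2 * N * \<delta>) - 1 / (2 * N * (t - x0))" for t
  have dne: "t - x0 \<noteq> 0" "\<delta> \<le> \<bar>t - x0\<bar>" if "t \<in> {a..b}" for t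
    using that side dl by auto
  have Enorm: "norm (E t) = 1" for t by (simp add: E_def)
  have wc: "continuous_on S w" for S
    using wd by (meson continuous_on_vector_derivative has_vector_derivative_at_within)
  have Ec: "continuous_on S E" for S
    unfolding E_def by (intro continuous_intros)
  have hc: "continuous_on {a..b} h"
    unfolding h_def by (intro continuous_intros wc Ec)
  have Ed: "(E has_vector_derivative (\<i> * of_real (2 * N * (t - x0)) * E t)) (at t)" for t
    unfolding E_def by (rule phase_deriv)
  have Dd: "(D has_vector_derivative (- 1 / (2 * \<i> * of_real N * (of_real (t - x0))\<^sup>2))) (at t)"
    if "t \<noteq> x0" for t
    unfolding D_def using invd_deriv[OF that] N by simp
  have Rd: "(R has_vector_derivative (- (E t * w' t * D t + E t * w t * (- 1 / (2 * \<i> * of_real N * (of_real (t - x0))\<^sup>2))))) (at t)"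
    if t: "a < t" "t < b" for t
  proof -
    have tx: "t \<noteq> x0" using dne[of t] t by auto
    have I: "((\<lambda>u. integral {a..u} h) has_vector_derivative h t) (at t)"
      using integral_has_vector_derivative[OF hc, of t] t by (simp add: at_within_Icc_at)
    have P: "(\<Phi> has_vector_derivative
        (E t * w t * (- 1 / (2 * \<i> * of_real N * (of_real (t - x0))\<^sup>2)) +
         (E t * w' t + (\<i> * of_real (2 * N * (t - x0)) * E t) * w t) * D t)) (at t)"
      unfolding \<Phi>_def
      by (intro has_vector_derivative_mult Ed Dd tx wd)
    have eq: "(\<i> * of_real (2 * N * (t - x0)) * E t) * w t * D t = h t"
      unfolding h_def D_def using tx N by (simp add: field_simps)
    have "(R has_vector_derivative (h t - (E t * w t * (- 1 / (2 * \<i> * of_real N * (of_real (t - x0))\<^sup>2)) +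
         (E t * w' t + (\<i> * of_real (2 * N * (t - x0)) * E t) * w t) * D t))) (at t)"
      unfolding R_def[abs_def] by (intro has_vector_derivative_diff I P)
    then show ?thesis using eq by (simp add: algebra_simps)
  qed
  have \<phi>d: "(\<phi> has_vector_derivative (K / (2 * N * \<delta>) + 1 / (2 * N * (t - x0)\<^sup>2))) (at t)"
    if "t \<noteq> x0" for t
  proof -
    have y: "((\<lambda>s. 1 / (2 * N * s)) has_real_derivative (- 1 / (2 * N * (t - x0)\<^sup>2))) (at (t - x0))"
      using inv_lin_deriv[of "t - x0" N] that N by simp
    have z: "((\<lambda>t. t - x0) has_real_derivative 1) (at t)"
      by (auto intro!: derivative_eq_intros)
    have "(\<phi> has_real_derivative (K / (2 * N * \<delta>) - (- 1 / (2 * N * (t - x0)\<^sup>2)) * 1)) (at t)"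
      unfolding \<phi>_def[abs_def]
      using N dl by (intro DERIV_diff DERIV_chain2[OF y z]) (auto intro!: derivative_eq_intros)
    then show ?thesis by (simp add: has_real_derivative_iff_has_vector_derivative)
  qed
  have bnd: "norm (- (E t * w' t * D t + E t * w t * (- 1 / (2 * \<i> * of_real N * (of_real (t - x0))\<^sup>2))))
       \<le> K / (2 * N * \<delta>) + 1 / (2 * N * (t - x0)\<^sup>2)" if t: "a < t" "t < b" for t
  proof -
    have d: "\<delta> \<le> \<bar>t - x0\<bar>" "t - x0 \<noteq> 0" using dne[of t] t by auto
    have nD: "norm (D t) = 1 / (2 * N * \<bar>t - x0\<bar>)"
      unfolding D_def using N by (simp add: norm_divide norm_mult)
    have "norm (E t * w' t * D t) \<le> K / (2 * N * \<delta>)"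
    proof -
      have "norm (E t * w' t * D t) = norm (w' t) / (2 * N * \<bar>t - x0\<bar>)"
        by (simp add: norm_mult Enorm nD)
      also have "\<dots> \<le> K / (2 * N * \<bar>t - x0\<bar>)"
        using wK[of t] N d by (intro divide_right_mono) auto
      also have "\<dots> \<le> K / (2 * N * \<delta>)"
        using K N d dl by (intro divide_left_mono mult_left_mono) auto
      finally show ?thesis .
    qed
    moreover have "norm (E t * w t * (- 1 / (2 * \<i> * of_real N * (of_real (t - x0))\<^sup>2))) \<le> 1 / (2 * N * (t - x0)\<^sup>2)"
    proof -
      have "norm (E t * w t * (- 1 / (2 * \<i> * of_real N * (of_real (t - x0))\<^sup>2))) = norm (w t) / (2 * N * (t - x0)\<^sup>2)"
        using N by (simp add: norm_mult Enorm norm_divide norm_power)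
      also have "\<dots> \<le> 1 / (2 * N * (t - x0)\<^sup>2)"
        using w1[of t] N d by (intro divide_right_mono) auto
      finally show ?thesis .
    qed
    moreover have "norm (- (E t * w' t * D t + E t * w t * (- 1 / (2 * \<i> * of_real N * (of_real (t - x0))\<^sup>2))))
      \<le> norm (E t * w' t * D t) + norm (E t * w t * (- 1 / (2 * \<i> * of_real N * (of_real (t - x0))\<^sup>2)))"
      unfolding norm_minus_cancel by (rule norm_triangle_ineq)
    ultimately show ?thesis by linarith
  qed
  have Rc: "continuous_on {a..b} R"
  proof -
    have "continuous_on {a..b} (\<lambda>u. integral {a..u} h)"
      using integral_has_vector_derivative[OF hc]
      by (meson continuous_on_vector_derivative)
    moreover have "continuous_on {a..b} D"
      unfolding D_def using dne N by (intro continuous_intros) auto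
    ultimately show ?thesis
      unfolding R_def[abs_def] \<Phi>_def[abs_def] by (intro continuous_intros wc Ec)
  qed
  have \<phi>c: "continuous_on {a..b} \<phi>"
    unfolding \<phi>_def[abs_def] using dne N dl by (intro continuous_intros) auto
  have main: "norm (R b - R a) \<le> \<phi> b - \<phi> a"
    by (rule differentiable_bound_general[OF ab Rc \<phi>c Rd \<phi>d bnd]) (use dne in auto)
  have Ra: "R a = - \<Phi> a" unfolding R_def by simp
  have Phin: "norm (\<Phi> t) \<le> 1 / (2 * N * \<delta>)" if "t \<in> {a..b}" for t
  proof -
    have d: "\<delta> \<le> \<bar>t - x0\<bar>" "t - x0 \<noteq> 0" using dne[OF that] by auto
    have "norm (\<Phi> t) = norm (w t) / (2 * N * \<bar>t - x0\<bar>)"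
      unfolding \<Phi>_def D_def using N by (simp add: norm_mult Enorm norm_divide)
    also have "\<dots> \<le> 1 / (2 * N * \<bar>t - x0\<bar>)"
      using w1[of t] N d by (intro divide_right_mono) auto
    also have "\<dots> \<le> 1 / (2 * N * \<delta>)"
      using N d dl by (intro divide_left_mono mult_left_mono) auto
    finally show ?thesis .
  qed
  have \<phi>b: "\<phi> b - \<phi> a \<le> K * (b - a) / (2 * N * \<delta>) + 1 / (2 * N * \<delta>)"
  proof -
    have "1 / (2 * N * (a - x0)) - 1 / (2 * N * (b - x0)) \<le> 1 / (2 * N * \<delta>)"
    proof (cases "x0 + \<delta> \<le> a")
      case True
      then have "1 / (2 * N * (a - x0)) \<le> 1 / (2 * N * \<delta>)"
        using N dl by (intro divide_left_mono mult_left_mono mult_pos_pos) auto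
      moreover have "0 \<le> 1 / (2 * N * (b - x0))" using True ab N dl by auto
      ultimately show ?thesis by linarith
    next
      case False
      then have bx: "b \<le> x0 - \<delta>" using side by auto
      have e: "2 * N * (x0 - b) = - (2 * N * (b - x0))" by (simp add: algebra_simps)
      have "- (1 / (2 * N * (b - x0))) = 1 / (2 * N * (x0 - b))"
        unfolding e by simp
      moreover have "1 / (2 * N * (x0 - b)) \<le> 1 / (2 * N * \<delta>)"
        using N dl bx by (intro divide_left_mono mult_left_mono mult_pos_pos) auto
      moreover have "1 / (2 * N * (a - x0)) \<le> 0"
      proof -
        have "2 * N * (a - x0) < 0" using bx ab N dl by (intro mult_pos_neg) auto
        then show ?thesis by (intro divide_nonneg_neg) auto
      qed
      ultimately show ?thesis by linarith
    qed
    moreover have "K * (b - a) / (2 * N * \<delta>) = K * b / (2 * N * \<delta>) - K * a / (2 * N * \<delta>)"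
      by (simp add: right_diff_distrib diff_divide_distrib)
    ultimately show ?thesis unfolding \<phi>_def by linarith
  qed
  have ieq: "integral {a..b} h = R b - R a + \<Phi> b - \<Phi> a"
    unfolding R_def by simp
  have "norm (R b - R a + \<Phi> b - \<Phi> a) \<le> norm (R b - R a + \<Phi> b) + norm (\<Phi> a)"
    by (rule norm_triangle_ineq4)
  moreover have "norm (R b - R a + \<Phi> b) \<le> norm (R b - R a) + norm (\<Phi> b)"
    by (rule norm_triangle_ineq)
  ultimately have "norm (integral {a..b} h) \<le> norm (R b - R a) + norm (\<Phi> b) + norm (\<Phi> a)"
    unfolding ieq by linarith
  also have "\<dots> \<le> (K * (b - a) / (2 * N * \<delta>) + 1 / (2 * N * \<delta>)) + 1 / (2 * N * \<delta>) + 1 / (2 * N * \<delta>)"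
    using main \<phi>b Phin[of a] Phin[of b] ab by (intro add_mono) auto
  moreover have "1 / (2 * N * \<delta>) + 1 / (2 * N * \<delta>) = 1 / (N * \<delta>)"
    by (simp add: field_simps)
  ultimately show ?thesis unfolding h_def E_def by linarith
qed

lemma far_piece':
  fixes w w' :: "real \<Rightarrow> complex" and N x0 \<delta> K a b :: real
  assumes N: "N > 0" and dl: "\<delta> > 0" and K: "K \<ge> 0" and ab: "a \<le> b" "b - a \<le> 1"
    and side: "a < b \<Longrightarrow> x0 + \<delta> \<le> a \<or> b \<le> x0 - \<delta>"
    and wd: "\<And>t. (w has_vector_derivative w' t) (at t)"
    and w1: "\<And>t. norm (w t) \<le> 1" and wK: "\<And>t. norm (w' t) \<le> K"
  shows "norm (integral {a..b} (\<lambda>t. exp (\<i> * of_real (N * (t - x0)\<^sup>2)) * w t))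
           \<le> (3 + K) / (2 * N * \<delta>)"
proof (cases "a = b")
  case True
  then show ?thesis using N dl K by simp
next
  case False
  then have ab': "a < b" using ab by simp
  have "norm (integral {a..b} (\<lambda>t. exp (\<i> * of_real (N * (t - x0)\<^sup>2)) * w t))
           \<le> 1 / (N * \<delta>) + K * (b - a) / (2 * N * \<delta>) + 1 / (2 * N * \<delta>)"
    by (rule far_piece[OF N dl K ab' side[OF ab'] wd w1 wK])
  also have "K * (b - a) / (2 * N * \<delta>) \<le> K / (2 * N * \<delta>)"
    using K ab N dl by (intro divide_right_mono) (auto simp: mult_left_le)
  also have "1 / (N * \<delta>) = 2 / (2 * N * \<delta>)" by simp
  finally show ?thesis by (simp add: add_divide_distrib)
qed

lemma osc:
  fixes w w' :: "real \<Rightarrow> complex" and N x0 K s1 s2 :: real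
  assumes N: "N > 0" and K: "K \<ge> 0" and s: "s1 \<le> s2" "s2 - s1 \<le> 1"
    and wd: "\<And>t. (w has_vector_derivative w' t) (at t)"
    and w1: "\<And>t. norm (w t) \<le> 1" and wK: "\<And>t. norm (w' t) \<le> K"
  shows "(\<lambda>t. exp (\<i> * of_real (N * (t - x0)\<^sup>2)) * w t) integrable_on {s1..s2}"
    "norm (integral {s1..s2} (\<lambda>t. exp (\<i> * of_real (N * (t - x0)\<^sup>2)) * w t))
           \<le> 5 * sqrt (1 + K) / sqrt N"
proof -
  define h where "h t = exp (\<i> * of_real (N * (t - x0)\<^sup>2)) * w t" for t
  have wc: "continuous_on S w" for S
    using wd by (meson continuous_on_vector_derivative has_vector_derivative_at_within)
  have hc: "continuous_on S h" for S
    unfolding h_def by (intro continuous_intros wc)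
  have hi: "h integrable_on {a..b}" for a b
    by (rule integrable_continuous_interval[OF hc])
  then show "(\<lambda>t. exp (\<i> * of_real (N * (t - x0)\<^sup>2)) * w t) integrable_on {s1..s2}"
    unfolding h_def .
  define \<delta> where "\<delta> = sqrt ((1 + K) / N)"
  have dl: "\<delta> > 0" unfolding \<delta>_def using N K by simp
  have dsq: "\<delta> * \<delta> = (1 + K) / N" unfolding \<delta>_def using N K by simp
  have dval: "\<delta> = sqrt (1 + K) / sqrt N" unfolding \<delta>_def by (simp add: real_sqrt_divide)
  define p where "p = max s1 (min s2 (x0 - \<delta>))"
  define q where "q = max p (min s2 (x0 + \<delta>))"
  have pq: "s1 \<le> p" "p \<le> q" "q \<le> s2" "q - p \<le> 2 * \<delta>"
    unfolding p_def q_def using s dl by auto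
  have I1: "norm (integral {s1..p} h) \<le> (3 + K) / (2 * N * \<delta>)"
    unfolding h_def
  proof (rule far_piece'[OF N dl K _ _ _ wd w1 wK])
    show "s1 \<le> p" "p - s1 \<le> 1" using pq s by auto
    show "x0 + \<delta> \<le> s1 \<or> p \<le> x0 - \<delta>" if "s1 < p"
    proof -
      have "p = max s1 (min s2 (x0 - \<delta>))" by (rule p_def)
      then show ?thesis using that by (auto simp: max_def min_def split: if_splits)
    qed
  qed
  have I3: "norm (integral {q..s2} h) \<le> (3 + K) / (2 * N * \<delta>)"
    unfolding h_def
  proof (rule far_piece'[OF N dl K _ _ _ wd w1 wK])
    show "q \<le> s2" "s2 - q \<le> 1" using pq s by auto
    show "x0 + \<delta> \<le> q \<or> s2 \<le> x0 - \<delta>" if "q < s2"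
    proof -
      have "q = max p (min s2 (x0 + \<delta>))" by (rule q_def)
      then show ?thesis using that by (auto simp: max_def min_def split: if_splits)
    qed
  qed
  have I2: "norm (integral {p..q} h) \<le> 2 * \<delta>"
  proof -
    have "norm (integral {p..q} h) \<le> 1 * Henstock_Kurzweil_Integration.content (cbox p q)"
      by (rule has_integral_bound[of 1 h _ p q])
        (auto simp: h_def norm_mult w1 intro: integrable_integral[OF hi[of p q]])
    then show ?thesis using pq by simp
  qed
  have ieq: "integral {s1..s2} h = integral {s1..p} h + integral {p..q} h + integral {q..s2} h"
  proof -
    have "integral {s1..q} h + integral {q..s2} h = integral {s1..s2} h"
      using pq hi by (intro Henstock_Kurzweil_Integration.integral_combine) auto
    moreover have "integral {s1..p} h + integral {p..q} h = integral {s1..q} h"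
      using pq hi by (intro Henstock_Kurzweil_Integration.integral_combine) auto
    ultimately show ?thesis by simp
  qed
  moreover have "norm (integral {s1..p} h + integral {p..q} h + integral {q..s2} h)
      \<le> norm (integral {s1..p} h + integral {p..q} h) + norm (integral {q..s2} h)"
    by (rule norm_triangle_ineq)
  moreover have "norm (integral {s1..p} h + integral {p..q} h)
      \<le> norm (integral {s1..p} h) + norm (integral {p..q} h)"
    by (rule norm_triangle_ineq)
  moreover have "(3 + K) / (2 * N * \<delta>) + (3 + K) / (2 * N * \<delta>) = (3 + K) / (N * \<delta>)"
    by (simp add: field_simps)
  ultimately have "norm (integral {s1..s2} h) \<le> 2 * \<delta> + (3 + K) / (N * \<delta>)"
    unfolding ieq using I1 I2 I3 by linarith
  also have "(3 + K) / (N * \<delta>) \<le> 3 * \<delta>"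
  proof -
    have "(3 + K) / (N * \<delta>) \<le> 3 * (1 + K) / (N * \<delta>)"
      using K N dl by (intro divide_right_mono) auto
    also have "3 * (1 + K) / (N * \<delta>) = 3 * \<delta>"
      using dsq N dl by (simp add: field_simps)
    finally show ?thesis .
  qed
  finally show "norm (integral {s1..s2} (\<lambda>t. exp (\<i> * of_real (N * (t - x0)\<^sup>2)) * w t))
           \<le> 5 * sqrt (1 + K) / sqrt N"
    unfolding h_def[symmetric] dval by simp
qed

lemma infsum_single_supp:
  fixes f :: "int \<Rightarrow> 'b::{comm_monoid_add, t2_space}"
  assumes "\<And>m. m \<noteq> k \<Longrightarrow> f m = 0"
  shows "infsum f UNIV = f k"
proof -
  have "infsum f UNIV = infsum f {k}"
    by (rule infsum_cong_neutral) (use assms in auto)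
  then show ?thesis by simp
qed

lemma infsum_two_supp:
  fixes f :: "int \<Rightarrow> 'b::{comm_monoid_add, t2_space}"
  assumes "\<And>m. m \<noteq> k1 \<Longrightarrow> m \<noteq> k2 \<Longrightarrow> f m = 0" "k1 \<noteq> k2"
  shows "infsum f UNIV = f k1 + f k2"
proof -
  have "infsum f UNIV = infsum f {k1, k2}"
    by (rule infsum_cong_neutral) (use assms in auto)
  then show ?thesis using assms(2) by simp
qed

lemma summable_two_supp:
  fixes f :: "int \<Rightarrow> 'b::{comm_monoid_add, topological_space}"
  assumes "\<And>m. m \<noteq> k1 \<Longrightarrow> m \<noteq> k2 \<Longrightarrow> f m = 0"
  shows "f summable_on UNIV"
proof (rule finite_nonzero_values_imp_summable_on)
  show "finite {x \<in> UNIV. f x \<noteq> 0}"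
    by (rule finite_subset[of _ "{k1, k2}"]) (use assms in auto)
qed

lemma ell2_two_supp:
  assumes "\<And>m. m \<noteq> k1 \<Longrightarrow> m \<noteq> k2 \<Longrightarrow> \<psi> m = 0"
  shows "\<psi> \<in> ell2"
  unfolding ell2_def using assms by (auto intro!: summable_two_supp[of k1 k2])

lemma basis_ell2: "basis j \<in> ell2"
  by (rule ell2_two_supp[of j j]) (simp add: basis_def)

lemma l2inner_basis: "l2inner \<phi> (basis k) = cnj (\<phi> k)"
  unfolding l2inner_def by (subst infsum_single_supp[where k=k]) (auto simp: basis_def)

definition aph :: "int \<Rightarrow> real \<Rightarrow> real" where
  "aph m t = ((real_of_int m + t) ^ 3 - (real_of_int m) ^ 3) / 3"

definition ph :: "int \<Rightarrow> real \<Rightarrow> complex" where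
  "ph m t = exp (- \<i> * of_real (aph m t))"

lemma ph_norm [simp]: "norm (ph m t) = 1"
  by (simp add: ph_def)

lemma ph_cnj_mult [simp]: "ph m t * cnj (ph m t) = 1" "cnj (ph m t) * ph m t = 1"
proof -
  have "ph m t * cnj (ph m t) = of_real ((norm (ph m t))\<^sup>2)"
    by (simp only: complex_norm_square)
  then show "ph m t * cnj (ph m t) = 1" "cnj (ph m t) * ph m t = 1" by (simp_all add: mult.commute)
qed

lemma cnj_ph: "cnj (ph m t) = exp (\<i> * of_real (aph m t))"
  by (simp add: ph_def exp_cnj)

lemma aph_deriv:
  "((\<lambda>s. exp (\<i> * of_real (aph m s))) has_vector_derivative
     (\<i> * of_real (Em m t) * exp (\<i> * of_real (aph m t)))) (at t)"
proof -
  have "((\<lambda>z. exp (\<i> * (((of_int m + z) ^ 3 - (of_int m) ^ 3) / 3))) has_field_derivative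
          (exp (\<i> * (((of_int m + of_real t) ^ 3 - (of_int m) ^ 3) / 3)) * (\<i> * (3 * (of_int m + of_real t)^2 / 3)))) (at (of_real t))"
    by (auto intro!: derivative_eq_intros)
  from has_vector_derivative_real_field[OF this]
  show ?thesis by (simp add: aph_def Em_def algebra_simps)
qed

lemma l2inner_H0_basis: "l2inner (H0 t (basis j)) v = of_real (Em j t) * v j"
  unfolding l2inner_def H0_def
  by (subst infsum_single_supp[where k=j]) (auto simp: basis_def)

lemma U0_char:
  assumes P: "propagator H0 U0" and \<psi>: "\<psi> \<in> ell2"
  shows "U0 t \<psi> m = ph m t * \<psi> m"
proof -
  define g where "g s = U0 s \<psi> m" for s
  have gd: "(g has_vector_derivative (- \<i> * (of_real (Em m s) * g s))) (at s)" for s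
    using P \<psi> unfolding propagator_def g_def by (auto simp: l2inner_H0_basis)
  define F where "F s = exp (\<i> * of_real (aph m s)) * g s" for s
  have Fd: "(F has_vector_derivative 0) (at s within UNIV)" for s
  proof -
    have "(F has_vector_derivative (exp (\<i> * of_real (aph m s)) * (- \<i> * (of_real (Em m s) * g s)) +
        (\<i> * of_real (Em m s) * exp (\<i> * of_real (aph m s))) * g s)) (at s)"
      unfolding F_def[abs_def] by (intro has_vector_derivative_mult aph_deriv gd)
    then show ?thesis by (simp add: algebra_simps)
  qed
  obtain c where c: "\<And>x. x \<in> UNIV \<Longrightarrow> F x = c"
    using has_vector_derivative_zero_constant[of UNIV F, OF convex_UNIV Fd] by blast
  have "F t = F 0" using c by simp
  also have "F 0 = \<psi> m"
    using P \<psi> by (simp add: F_def g_def aph_def propagator_def)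
  finally have "exp (\<i> * of_real (aph m t)) * g t = \<psi> m" unfolding F_def .
  then have "ph m t * (exp (\<i> * of_real (aph m t)) * g t) = ph m t * \<psi> m" by simp
  moreover have "ph m t * exp (\<i> * of_real (aph m t)) = 1"
    using ph_cnj_mult(1)[of m t] by (simp add: cnj_ph)
  ultimately show ?thesis unfolding g_def by (simp add: mult.assoc[symmetric])
qed

lemma ell2_mult_unit:
  assumes "\<psi> \<in> ell2" "\<And>m. norm (c m) = 1"
  shows "(\<lambda>m. c m * \<psi> m) \<in> ell2"
  using assms unfolding ell2_def by (simp add: norm_mult)

lemma adj_U0:
  assumes P: "propagator H0 U0" and Z: "Z \<in> ell2"
  shows "adj (U0 t) Z = (\<lambda>m. cnj (ph m t) * Z m)"
proof -
  define C where "C = (\<lambda>m. cnj (ph m t) * Z m)"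
  have Cl: "C \<in> ell2" unfolding C_def by (rule ell2_mult_unit[OF Z]) simp
  have Cprop: "l2inner C w = l2inner Z (U0 t w)" if "w \<in> ell2" for w
  proof -
    have "cnj (C m) * w m = cnj (Z m) * U0 t w m" for m
      using U0_char[OF P that] by (simp add: C_def mult_ac)
    then show ?thesis unfolding l2inner_def by simp
  qed
  have "(THE \<phi>. \<phi> \<in> ell2 \<and> (\<forall>w\<in>ell2. l2inner \<phi> w = l2inner Z (U0 t w))) = C"
  proof (rule the_equality)
    show "C \<in> ell2 \<and> (\<forall>w\<in>ell2. l2inner C w = l2inner Z (U0 t w))" using Cl Cprop by auto
  next
    fix \<phi> assume h: "\<phi> \<in> ell2 \<and> (\<forall>w\<in>ell2. l2inner \<phi> w = l2inner Z (U0 t w))"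
    show "\<phi> = C"
    proof
      fix k
      have "cnj (\<phi> k) = cnj (C k)"
        using h Cprop[OF basis_ell2] basis_ell2 by (simp add: l2inner_basis[symmetric])
      then show "\<phi> k = C k" by simp
    qed
  qed
  then show ?thesis unfolding adj_def C_def .
qed

lemma infsum_of_real_sum:
  fixes g :: "int \<Rightarrow> real"
  assumes "g summable_on UNIV"
  shows "(\<Sum>\<^sub>\<infinity>m. complex_of_real (g m)) = complex_of_real (\<Sum>\<^sub>\<infinity>m. g m)"
  by (rule infsumI[OF has_sum_of_real[OF has_sum_infsum[OF assms]]])

lemma l2inner_self:
  assumes "\<psi> \<in> ell2"
  shows "l2inner \<psi> \<psi> = complex_of_real (\<Sum>\<^sub>\<infinity>m. (cmod (\<psi> m))\<^sup>2)"
proof -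
  have "cnj (\<psi> m) * \<psi> m = complex_of_real ((cmod (\<psi> m))\<^sup>2)" for m
    by (metis complex_norm_square mult.commute)
  then have "l2inner \<psi> \<psi> = (\<Sum>\<^sub>\<infinity>m. complex_of_real ((cmod (\<psi> m))\<^sup>2))"
    unfolding l2inner_def by simp
  also have "\<dots> = complex_of_real (\<Sum>\<^sub>\<infinity>m. (cmod (\<psi> m))\<^sup>2)"
    using assms unfolding ell2_def by (intro infsum_of_real_sum) simp
  finally show ?thesis .
qed

lemma unitary_sq:
  assumes A: "unitary_op A" and \<psi>: "\<psi> \<in> ell2"
  shows "A \<psi> \<in> ell2" "(\<Sum>\<^sub>\<infinity>m. (cmod (A \<psi> m))\<^sup>2) = (\<Sum>\<^sub>\<infinity>m. (cmod (\<psi> m))\<^sup>2)"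
proof -
  show Al: "A \<psi> \<in> ell2" using A \<psi> bij_betwE[of A ell2 ell2] unfolding unitary_op_def by blast
  have "l2inner (A \<psi>) (A \<psi>) = l2inner \<psi> \<psi>" using A \<psi> unfolding unitary_op_def by blast
  then show "(\<Sum>\<^sub>\<infinity>m. (cmod (A \<psi> m))\<^sup>2) = (\<Sum>\<^sub>\<infinity>m. (cmod (\<psi> m))\<^sup>2)"
    using l2inner_self[OF Al] l2inner_self[OF \<psi>] by simp
qed

lemma elem_le_infsum:
  fixes g :: "int \<Rightarrow> real"
  assumes "g summable_on UNIV" "\<And>m. 0 \<le> g m"
  shows "g j \<le> (\<Sum>\<^sub>\<infinity>m. g m)"
proof -
  have "infsum g {j} \<le> infsum g UNIV"
    by (rule infsum_mono_neutral) (use assms in auto)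
  then show ?thesis by simp
qed

lemma ell2_sum_le1:
  assumes "\<psi> \<in> ell2" "l2norm \<psi> \<le> 1"
  shows "(\<Sum>\<^sub>\<infinity>m. (cmod (\<psi> m))\<^sup>2) \<le> 1"
  using assms unfolding l2norm_def by simp

lemma ell2_comp_le1:
  assumes "\<psi> \<in> ell2" "(\<Sum>\<^sub>\<infinity>m. (cmod (\<psi> m))\<^sup>2) \<le> 1"
  shows "cmod (\<psi> j) \<le> 1"
proof -
  have "(cmod (\<psi> j))\<^sup>2 \<le> 1"
    using elem_le_infsum[of "\<lambda>m. (cmod (\<psi> m))\<^sup>2" j] assms unfolding ell2_def by simp
  then show ?thesis by (simp add: power_le_one_iff abs_le_square_iff[symmetric])
qed

lemma bij_shift: "bij_betw (\<lambda>m::int. m - k) UNIV UNIV"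
  by (rule bij_betwI[where g="\<lambda>m. m + k"]) auto

lemma shift_summable:
  fixes F :: "int \<Rightarrow> real"
  assumes "F summable_on UNIV"
  shows "(\<lambda>m. F (m - k)) summable_on UNIV" "(\<Sum>\<^sub>\<infinity>m. F (m - k)) = (\<Sum>\<^sub>\<infinity>m. F m)"
  using summable_on_reindex_bij_betw[OF bij_shift[of k], of F] infsum_reindex_bij_betw[OF bij_shift[of k], of F] assms
  by auto

lemma amgm_L:
  fixes x y L :: real
  assumes "L > 0"
  shows "x * y \<le> 1 / (2 * L) * x\<^sup>2 + L / 2 * y\<^sup>2"
proof -
  have "1 / (2 * L) * x\<^sup>2 + L / 2 * y\<^sup>2 - x * y = (x - L * y)\<^sup>2 / (2 * L)"
    using assms by (simp add: field_simps power2_eq_square)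
  moreover have "0 \<le> (x - L * y)\<^sup>2 / (2 * L)" using assms by simp
  ultimately show ?thesis by linarith
qed

lemma S_bound:
  fixes u F :: "int \<Rightarrow> complex" and c0 :: real
  assumes u: "u \<in> ell2" "(\<Sum>\<^sub>\<infinity>m. (cmod (u m))\<^sup>2) \<le> 1"
    and F: "(\<lambda>m. (cmod (F m))\<^sup>2) summable_on UNIV"
    and c0: "0 \<le> c0" "c0 \<le> 1"
  shows "(\<lambda>m. cnj (complex_of_real c0 * F (m - j)) * u m) summable_on UNIV"
    "norm (\<Sum>\<^sub>\<infinity>m. cnj (complex_of_real c0 * F (m - j)) * u m) \<le> 1 + sqrt (\<Sum>\<^sub>\<infinity>m. (cmod (F m))\<^sup>2)"
proof -
  define r where "r = sqrt (\<Sum>\<^sub>\<infinity>m. (cmod (F m))\<^sup>2)"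
  define L where "L = 1 + r"
  have r0: "r \<ge> 0" unfolding r_def by (simp add: infsum_nonneg)
  have L0: "L > 0" unfolding L_def using r0 by simp
  have rsq: "r\<^sup>2 = (\<Sum>\<^sub>\<infinity>m. (cmod (F m))\<^sup>2)" unfolding r_def by (simp add: infsum_nonneg)
  define f where "f m = cnj (complex_of_real c0 * F (m - j)) * u m" for m
  define G where "G m = 1 / (2 * L) * (cmod (F (m - j)))\<^sup>2 + L / 2 * (cmod (u m))\<^sup>2" for m
  have us: "(\<lambda>m. (cmod (u m))\<^sup>2) summable_on UNIV" using u unfolding ell2_def by simp
  have Fs: "(\<lambda>m. (cmod (F (m - j)))\<^sup>2) summable_on UNIV"
    using shift_summable(1)[OF F, of j] by simp
  have Gs: "G summable_on UNIV"
    unfolding G_def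
    by (intro summable_on_add summable_on_cmult_right Fs us)
  have fG: "norm (f m) \<le> G m" for m
  proof -
    have "norm (f m) = c0 * (cmod (F (m - j)) * cmod (u m))"
      unfolding f_def using c0 by (simp add: norm_mult)
    also have "\<dots> \<le> 1 * (cmod (F (m - j)) * cmod (u m))"
      using c0 by (intro mult_right_mono) auto
    also have "\<dots> \<le> G m" unfolding G_def using amgm_L[OF L0] by simp
    finally show ?thesis .
  qed
  have fabs: "(\<lambda>m. norm (f m)) summable_on UNIV"
    by (rule summable_on_comparison_test[OF Gs]) (use fG in auto)
  then show fs: "(\<lambda>m. cnj (complex_of_real c0 * F (m - j)) * u m) summable_on UNIV"
    unfolding f_def[symmetric] using summable_on_iff_abs_summable_on_complex by blast
  have "norm (infsum f UNIV) \<le> (\<Sum>\<^sub>\<infinity>m. norm (f m))"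
    by (rule norm_infsum_bound) (use fabs in simp)
  also have "\<dots> \<le> infsum G UNIV"
    by (rule infsum_mono[OF fabs Gs fG])
  also have "infsum G UNIV = 1 / (2 * L) * (\<Sum>\<^sub>\<infinity>m. (cmod (F (m - j)))\<^sup>2) + L / 2 * (\<Sum>\<^sub>\<infinity>m. (cmod (u m))\<^sup>2)"
  proof -
    have "infsum G UNIV = (\<Sum>\<^sub>\<infinity>m. 1 / (2 * L) * (cmod (F (m - j)))\<^sup>2) + (\<Sum>\<^sub>\<infinity>m. L / 2 * (cmod (u m))\<^sup>2)"
      unfolding G_def by (rule infsum_add) (intro summable_on_cmult_right Fs us)+
    moreover have "(\<Sum>\<^sub>\<infinity>m. 1 / (2 * L) * (cmod (F (m - j)))\<^sup>2) = 1 / (2 * L) * (\<Sum>\<^sub>\<infinity>m. (cmod (F (m - j)))\<^sup>2)"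
      by (rule infsum_cmult_right) (use Fs in simp)
    moreover have "(\<Sum>\<^sub>\<infinity>m. L / 2 * (cmod (u m))\<^sup>2) = L / 2 * (\<Sum>\<^sub>\<infinity>m. (cmod (u m))\<^sup>2)"
      by (rule infsum_cmult_right) (use us in simp)
    ultimately show ?thesis by simp
  qed
  also have "\<dots> \<le> 1 / (2 * L) * r\<^sup>2 + L / 2 * 1"
    using shift_summable(2)[OF F, of j] rsq u(2) L0 by (intro add_mono mult_left_mono) auto
  also have "\<dots> \<le> L"
  proof -
    have "r\<^sup>2 \<le> L * L" unfolding L_def using r0 by (simp add: power2_eq_square algebra_simps)
    then have "r\<^sup>2 / L \<le> L" using L0 by (simp add: divide_le_eq)
    then show ?thesis by (simp add: field_simps)
  qed
  finally show "norm (\<Sum>\<^sub>\<infinity>m. cnj (complex_of_real c0 * F (m - j)) * u m) \<le> 1 + sqrt (\<Sum>\<^sub>\<infinity>m. (cmod (F m))\<^sup>2)"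
    unfolding f_def L_def r_def .
qed

definition cc :: real where "cc = 1 / sqrt (2 * pi)"

lemma cc_bounds: "0 \<le> cc" "cc \<le> 1"
proof -
  show "0 \<le> cc" unfolding cc_def by simp
  have "1 \<le> 2 * pi" using pi_gt3 by linarith
  then have "1 \<le> sqrt (2 * pi)" by simp
  then show "cc \<le> 1" unfolding cc_def by simp
qed

lemma Vop_basis: "Vop V (basis j) m = complex_of_real cc * Vhat V (m - j)"
  unfolding Vop_def cc_def
  by (subst infsum_single_supp[where k=j]) (auto simp: basis_def)

lemma l2inner_Hop_basis:
  assumes u: "u \<in> ell2" "(\<Sum>\<^sub>\<infinity>m. (cmod (u m))\<^sup>2) \<le> 1"
    and F: "(\<lambda>m. (cmod (Vhat V m))\<^sup>2) summable_on UNIV"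
  shows "l2inner (Hop V t (basis j)) u = of_real (Em j t) * u j +
           (\<Sum>\<^sub>\<infinity>m. cnj (complex_of_real cc * Vhat V (m - j)) * u m)"
proof -
  have "l2inner (Hop V t (basis j)) u =
     (\<Sum>\<^sub>\<infinity>m. cnj (H0 t (basis j) m) * u m + cnj (complex_of_real cc * Vhat V (m - j)) * u m)"
    unfolding l2inner_def Hop_def Vop_basis by (simp add: distrib_right)
  also have "\<dots> = (\<Sum>\<^sub>\<infinity>m. cnj (H0 t (basis j) m) * u m) + (\<Sum>\<^sub>\<infinity>m. cnj (complex_of_real cc * Vhat V (m - j)) * u m)"
  proof (rule infsum_add)
    show "(\<lambda>m. cnj (H0 t (basis j) m) * u m) summable_on UNIV"
      by (rule summable_two_supp[of j j]) (simp add: H0_def basis_def)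
    show "(\<lambda>m. cnj (complex_of_real cc * Vhat V (m - j)) * u m) summable_on UNIV"
      by (rule S_bound(1)[OF u F cc_bounds])
  qed
  also have "(\<Sum>\<^sub>\<infinity>m. cnj (H0 t (basis j) m) * u m) = of_real (Em j t) * u j"
    using l2inner_H0_basis[of t j u] unfolding l2inner_def .
  finally show ?thesis .
qed

lemma w_props:
  assumes P: "propagator (Hop V) U" and \<psi>: "\<psi> \<in> ell2" "l2norm \<psi> \<le> 1"
    and F: "(\<lambda>m. (cmod (Vhat V m))\<^sup>2) summable_on UNIV"
  shows "((\<lambda>s. exp (\<i> * of_real (aph j s)) * U s \<psi> j) has_vector_derivative
           (- \<i> * exp (\<i> * of_real (aph j t)) * (\<Sum>\<^sub>\<infinity>m. cnj (complex_of_real cc * Vhat V (m - j)) * U t \<psi> m))) (at t)"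
    "norm (exp (\<i> * of_real (aph j t)) * U t \<psi> j) \<le> 1"
    "norm (- \<i> * exp (\<i> * of_real (aph j t)) * (\<Sum>\<^sub>\<infinity>m. cnj (complex_of_real cc * Vhat V (m - j)) * U t \<psi> m)) \<le> 1 + norm0 V"
proof -
  have Ut: "unitary_op (U t)" using P unfolding propagator_def by blast
  have ul: "U t \<psi> \<in> ell2" by (rule unitary_sq(1)[OF Ut \<psi>(1)])
  have us: "(\<Sum>\<^sub>\<infinity>m. (cmod (U t \<psi> m))\<^sup>2) \<le> 1"
    using unitary_sq(2)[OF Ut \<psi>(1)] ell2_sum_le1[OF \<psi>] by simp
  define S where "S = (\<Sum>\<^sub>\<infinity>m. cnj (complex_of_real cc * Vhat V (m - j)) * U t \<psi> m)"
  have gd: "((\<lambda>s. U s \<psi> j) has_vector_derivative (- \<i> * (of_real (Em j t) * U t \<psi> j + S))) (at t)"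
  proof -
    have d0: "((\<lambda>s. U s \<psi> j) has_vector_derivative (- \<i> * l2inner (Hop V t (basis j)) (U t \<psi>))) (at t)"
      using P \<psi>(1) unfolding propagator_def by blast
    then show ?thesis by (simp only: l2inner_Hop_basis[OF ul us F] S_def)
  qed
  have "((\<lambda>s. exp (\<i> * of_real (aph j s)) * U s \<psi> j) has_vector_derivative
      (exp (\<i> * of_real (aph j t)) * (- \<i> * (of_real (Em j t) * U t \<psi> j + S)) +
       (\<i> * of_real (Em j t) * exp (\<i> * of_real (aph j t))) * U t \<psi> j)) (at t)"
    by (intro has_vector_derivative_mult aph_deriv gd)
  then show "((\<lambda>s. exp (\<i> * of_real (aph j s)) * U s \<psi> j) has_vector_derivative
           (- \<i> * exp (\<i> * of_real (aph j t)) * (\<Sum>\<^sub>\<infinity>m. cnj (complex_of_real cc * Vhat V (m - j)) * U t \<psi> m))) (at t)"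
    unfolding S_def[symmetric] by (simp add: algebra_simps)
  show "norm (exp (\<i> * of_real (aph j t)) * U t \<psi> j) \<le> 1"
    using ell2_comp_le1[OF ul us, of j] by (simp add: norm_mult)
  have "norm S \<le> 1 + norm0 V"
    unfolding S_def norm0_def by (rule S_bound(2)[OF ul us F cc_bounds])
  then show "norm (- \<i> * exp (\<i> * of_real (aph j t)) * (\<Sum>\<^sub>\<infinity>m. cnj (complex_of_real cc * Vhat V (m - j)) * U t \<psi> m)) \<le> 1 + norm0 V"
    unfolding S_def[symmetric] by (simp add: norm_mult)
qed

lemma cmod_add_sq: "(cmod (a + b))\<^sup>2 \<le> 2 * (cmod a)\<^sup>2 + 2 * (cmod b)\<^sup>2"
proof -
  have "cmod (a + b) \<le> cmod a + cmod b" by (rule norm_triangle_ineq)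
  then have "(cmod (a + b))\<^sup>2 \<le> (cmod a + cmod b)\<^sup>2"
    by (intro power_mono) auto
  also have "\<dots> \<le> 2 * (cmod a)\<^sup>2 + 2 * (cmod b)\<^sup>2"
    using sum_squares_ge_zero[of "cmod a - cmod b" 0] by (simp add: power2_eq_square algebra_simps)
  finally show ?thesis .
qed

lemma Vop_two:
  assumes "\<And>m. m \<noteq> k1 \<Longrightarrow> m \<noteq> k2 \<Longrightarrow> X m = 0" "k1 \<noteq> k2"
  shows "Vop V X m = complex_of_real cc * (Vhat V (m - k1) * X k1 + Vhat V (m - k2) * X k2)"
  unfolding Vop_def cc_def
  by (subst infsum_two_supp[of k1 k2]) (use assms in auto)

lemma Vop_two_ell2:
  assumes X: "\<And>m. m \<noteq> k1 \<Longrightarrow> m \<noteq> k2 \<Longrightarrow> X m = 0" "k1 \<noteq> k2"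
    and F: "(\<lambda>m. (cmod (Vhat V m))\<^sup>2) summable_on UNIV"
  shows "Vop V X \<in> ell2"
proof -
  define G where "G m = 2 * ((cmod (X k1))\<^sup>2 * (cmod (Vhat V (m - k1)))\<^sup>2) + 2 * ((cmod (X k2))\<^sup>2 * (cmod (Vhat V (m - k2)))\<^sup>2)" for m
  have Gs: "G summable_on UNIV"
    unfolding G_def
    by (intro summable_on_add summable_on_cmult_right shift_summable(1)[OF F])
  have "(\<lambda>m. (cmod (Vop V X m))\<^sup>2) summable_on UNIV"
  proof (rule summable_on_comparison_test[OF Gs])
    fix m
    have "(cmod (Vop V X m))\<^sup>2 = cc\<^sup>2 * (cmod (Vhat V (m - k1) * X k1 + Vhat V (m - k2) * X k2))\<^sup>2"
    proof -
      have "Vop V X m = complex_of_real cc * (Vhat V (m - k1) * X k1 + Vhat V (m - k2) * X k2)"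
        by (rule Vop_two) (use X in auto)
      then show ?thesis using cc_bounds by (simp add: norm_mult power_mult_distrib)
    qed
    also have "\<dots> \<le> 1 * (cmod (Vhat V (m - k1) * X k1 + Vhat V (m - k2) * X k2))\<^sup>2"
      using cc_bounds by (intro mult_right_mono) (auto simp: power_le_one)
    also have "\<dots> \<le> G m"
      using cmod_add_sq[of "Vhat V (m - k1) * X k1" "Vhat V (m - k2) * X k2"]
      unfolding G_def by (simp add: norm_mult power_mult_distrib mult_ac)
    finally show "(cmod (Vop V X m))\<^sup>2 \<le> G m" .
  qed simp
  then show ?thesis unfolding ell2_def by simp
qed

lemma l2inner_Pm: "l2inner \<phi> (Pm n Y) = cnj (\<phi> n) * Y n"
  unfolding l2inner_def Pm_def
  by (subst infsum_single_supp[where k=n]) auto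

lemma integrand_eq:
  assumes P0: "propagator H0 U0" and P: "propagator (Hop V) U" and \<psi>: "\<psi> \<in> ell2"
    and F: "(\<lambda>m. (cmod (Vhat V m))\<^sup>2) summable_on UNIV"
    and nl: "n \<noteq> - n - l" and V0: "Vhat V 0 = 0"
  shows "l2inner \<phi> (Pm n (adj (U0 t) (Vop V (U0 t (Pnl n l (adj (U0 t) (U t \<psi>)))))))
     = cnj (\<phi> n) * (cnj (ph n t) * (complex_of_real cc * (Vhat V (2 * n + l) * U t \<psi> (- n - l))))"
proof -
  define j where "j = - n - l"
  have nj: "n \<noteq> j" using nl unfolding j_def .
  have Ut: "unitary_op (U t)" using P unfolding propagator_def by blast
  have ul: "U t \<psi> \<in> ell2" by (rule unitary_sq(1)[OF Ut \<psi>])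
  define Y1 where "Y1 = adj (U0 t) (U t \<psi>)"
  have Y1: "Y1 = (\<lambda>m. cnj (ph m t) * U t \<psi> m)" unfolding Y1_def by (rule adj_U0[OF P0 ul])
  define X0 where "X0 = Pnl n l Y1"
  have X0s: "X0 m = 0" if "m \<noteq> n" "m \<noteq> j" for m
    using that unfolding X0_def Pnl_def Pm_def j_def by auto
  have X0n: "X0 n = Y1 n" using nj unfolding X0_def Pnl_def Pm_def j_def by auto
  have X0j: "X0 j = Y1 j" using nj unfolding X0_def Pnl_def Pm_def j_def by auto
  have X0l: "X0 \<in> ell2" by (rule ell2_two_supp[of n j]) (use X0s in auto)
  define X where "X = U0 t X0"
  have Xe: "X m = ph m t * X0 m" for m unfolding X_def by (rule U0_char[OF P0 X0l])
  have Xs: "X m = 0" if "m \<noteq> n" "m \<noteq> j" for m using X0s[OF that] Xe by simp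
  have Xj: "X j = U t \<psi> j"
    using Xe[of j] X0j Y1 by (simp add: mult.assoc[symmetric])
  define Z where "Z = Vop V X"
  have Zl: "Z \<in> ell2" unfolding Z_def by (rule Vop_two_ell2[OF _ nj F]) (use Xs in auto)
  have Zn: "Z n = complex_of_real cc * (Vhat V (2 * n + l) * U t \<psi> j)"
    unfolding Z_def using Vop_two[of n j X V n] Xs nj V0 Xj by (auto simp: j_def)
  have "adj (U0 t) Z = (\<lambda>m. cnj (ph m t) * Z m)" by (rule adj_U0[OF P0 Zl])
  then have "l2inner \<phi> (Pm n (adj (U0 t) Z)) = cnj (\<phi> n) * (cnj (ph n t) * Z n)"
    by (simp add: l2inner_Pm)
  then show ?thesis
    unfolding Z_def X_def X0_def Y1_def[symmetric] Zn[unfolded Z_def X_def X0_def] j_def by simp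
qed

lemma aph_identity:
  fixes n l :: int and t :: real
  shows "aph n t = real_of_int (2 * n + l) * (t - real_of_int l / 2)\<^sup>2
                   - real_of_int (2 * n + l) * (real_of_int l / 2)\<^sup>2 + aph (- n - l) t"
  unfolding aph_def by (simp add: field_simps power2_eq_square power3_eq_cube)

theorem lemma1:
  shows "\<exists>c>0. \<forall>(V::real \<Rightarrow> real) (n::int) (l::int) U0 U (s1::real) s2.
    (\<forall>x. V (x + 2 * pi) = V x) \<and>
    V absolutely_integrable_on {0..2*pi} \<and>
    (\<lambda>m. (cmod (Vhat V m))\<^sup>2) summable_on UNIV \<and>
    Vhat V 0 = 0 \<and>
    n \<ge> 0 \<and> l \<ge> 0 \<and> 2 * n + l \<ge> 1 \<and>
    propagator H0 U0 \<and> propagator (Hop V) U \<and>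
    s1 < s2 \<and>
    s1 \<in> {real_of_int l / 2 - 1/4 ..< real_of_int l / 2 + 1/4} \<and>
    s2 \<in> {real_of_int l / 2 - 1/4 ..< real_of_int l / 2 + 1/4}
    \<longrightarrow>
    (\<forall>\<phi>\<in>ell2. \<forall>\<psi>\<in>ell2. l2norm \<phi> \<le> 1 \<and> l2norm \<psi> \<le> 1 \<longrightarrow>
       (let f = (\<lambda>t. l2inner \<phi>
                  (Pm n (adj (U0 t) (Vop V (U0 t (Pnl n l (adj (U0 t) (U t \<psi>))))))))
        in f integrable_on {s1..s2} \<and>
           cmod (integral {s1..s2} f)
             \<le> c * sqrt (1 + norm0 V) * cmod (Vhat V (2 * n + l))
                 / sqrt (real_of_int (2 * n + l))))"
proof (intro exI[of _ 8] conjI allI impI ballI)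
  show "(0::real) < 8" by simp
  fix V :: "real \<Rightarrow> real" and n l :: int and U0 U :: "real \<Rightarrow> vec \<Rightarrow> vec" and s1 s2 :: real
    and \<phi> \<psi> :: vec
  assume H: "(\<forall>x. V (x + 2 * pi) = V x) \<and>
    V absolutely_integrable_on {0..2*pi} \<and>
    (\<lambda>m. (cmod (Vhat V m))\<^sup>2) summable_on UNIV \<and>
    Vhat V 0 = 0 \<and>
    n \<ge> 0 \<and> l \<ge> 0 \<and> 2 * n + l \<ge> 1 \<and>
    propagator H0 U0 \<and> propagator (Hop V) U \<and>
    s1 < s2 \<and>
    s1 \<in> {real_of_int l / 2 - 1/4 ..< real_of_int l / 2 + 1/4} \<and>
    s2 \<in> {real_of_int l / 2 - 1/4 ..< real_of_int l / 2 + 1/4}"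
  assume \<phi>: "\<phi> \<in> ell2" and \<psi>: "\<psi> \<in> ell2" and nrm: "l2norm \<phi> \<le> 1 \<and> l2norm \<psi> \<le> 1"
  have F: "(\<lambda>m. (cmod (Vhat V m))\<^sup>2) summable_on UNIV" using H by blast
  have V0: "Vhat V 0 = 0" using H by blast
  have N1: "2 * n + l \<ge> 1" using H by blast
  have P0: "propagator H0 U0" and P: "propagator (Hop V) U" using H by blast+
  have s: "s1 \<le> s2" "s2 - s1 \<le> 1" using H by auto
  have nl: "n \<noteq> - n - l" using N1 by linarith
  define Nr where "Nr = real_of_int (2 * n + l)"
  have Nr: "Nr > 0" "Nr \<ge> 1" unfolding Nr_def using N1 by linarith+
  define x0 where "x0 = real_of_int l / 2"
  define j where "j = - n - l"
  define r where "r = norm0 V"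
  have r0: "r \<ge> 0" unfolding r_def norm0_def by (simp add: infsum_nonneg)
  define S where "S t = (\<Sum>\<^sub>\<infinity>m. cnj (complex_of_real cc * Vhat V (m - j)) * U t \<psi> m)" for t
  define w where "w t = exp (- \<i> * of_real (Nr * x0\<^sup>2)) * (exp (\<i> * of_real (aph j t)) * U t \<psi> j)" for t
  define w' where "w' t = exp (- \<i> * of_real (Nr * x0\<^sup>2)) * (- \<i> * exp (\<i> * of_real (aph j t)) * S t)" for t
  have \<psi>1: "l2norm \<psi> \<le> 1" using nrm by blast
  have wd: "(w has_vector_derivative w' t) (at t)" for t
    unfolding w_def[abs_def] w'_def S_def
    by (intro has_vector_derivative_mult_right w_props(1)[OF P \<psi> \<psi>1 F])
  have w1: "norm (w t) \<le> 1" for t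
    unfolding w_def using w_props(2)[OF P \<psi> \<psi>1 F, of j t] by (simp add: norm_mult)
  have wK: "norm (w' t) \<le> 1 + r" for t
    unfolding w'_def S_def r_def using w_props(3)[OF P \<psi> \<psi>1 F, of j t]
    by (simp add: norm_mult)
  define h where "h t = exp (\<i> * of_real (Nr * (t - x0)\<^sup>2)) * w t" for t
  have osc1: "h integrable_on {s1..s2}" "norm (integral {s1..s2} h) \<le> 5 * sqrt (1 + (1 + r)) / sqrt Nr"
    unfolding h_def[abs_def]
    using osc[OF Nr(1) _ s wd w1 wK, of x0] r0 by auto
  define K0 where "K0 = cnj (\<phi> n) * (complex_of_real cc * Vhat V (2 * n + l))"
  have feq: "l2inner \<phi> (Pm n (adj (U0 t) (Vop V (U0 t (Pnl n l (adj (U0 t) (U t \<psi>))))))) = K0 * h t" for t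
  proof -
    have e: "cnj (ph n t) = exp (\<i> * of_real (Nr * (t - x0)\<^sup>2)) * exp (- \<i> * of_real (Nr * x0\<^sup>2)) * exp (\<i> * of_real (aph j t))"
    proof -
      have "cnj (ph n t) = exp (\<i> * of_real (aph n t))" by (rule cnj_ph)
      also have "aph n t = Nr * (t - x0)\<^sup>2 - Nr * x0\<^sup>2 + aph j t"
        unfolding Nr_def x0_def j_def by (rule aph_identity)
      also have "exp (\<i> * of_real (Nr * (t - x0)\<^sup>2 - Nr * x0\<^sup>2 + aph j t)) =
          exp (\<i> * of_real (Nr * (t - x0)\<^sup>2) + - \<i> * of_real (Nr * x0\<^sup>2) + \<i> * of_real (aph j t))"
        by (simp add: algebra_simps)
      finally show ?thesis by (simp only: exp_add)
    qed
    show ?thesis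
      unfolding integrand_eq[OF P0 P \<psi> F nl V0] K0_def h_def w_def e j_def[symmetric]
      by (simp add: mult_ac)
  qed
  have fint: "(\<lambda>t. K0 * h t) integrable_on {s1..s2}"
    by (rule integrable_on_mult_right[OF osc1(1)])
  have K0b: "norm K0 \<le> cmod (Vhat V (2 * n + l))"
  proof -
    have "cmod (\<phi> n) \<le> 1" using ell2_comp_le1[OF \<phi> ell2_sum_le1[OF \<phi>]] nrm by blast
    then have "cmod (\<phi> n) * (cc * cmod (Vhat V (2 * n + l))) \<le> 1 * (1 * cmod (Vhat V (2 * n + l)))"
      using cc_bounds by (intro mult_mono) auto
    then show ?thesis unfolding K0_def using cc_bounds by (simp add: norm_mult)
  qed
  have "norm (integral {s1..s2} (\<lambda>t. K0 * h t)) = norm K0 * norm (integral {s1..s2} h)"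
    by (simp add: norm_mult)
  also have "\<dots> \<le> cmod (Vhat V (2 * n + l)) * (5 * sqrt (1 + (1 + r)) / sqrt Nr)"
    using K0b osc1(2) by (intro mult_mono) auto
  also have "\<dots> \<le> cmod (Vhat V (2 * n + l)) * (8 * sqrt (1 + r) / sqrt Nr)"
  proof -
    have q: "sqrt (25 * (2 + r)) \<le> sqrt (64 * (1 + r))" using r0 by (simp add: algebra_simps)
    have s25: "sqrt (25::real) = 5" by (rule real_sqrt_unique) auto
    have s64: "sqrt (64::real) = 8" by (rule real_sqrt_unique) auto
    have "5 * sqrt (2 + r) \<le> 8 * sqrt (1 + r)"
      using q unfolding real_sqrt_mult s25 s64 .
    then have "5 * sqrt (1 + (1 + r)) / sqrt Nr \<le> 8 * sqrt (1 + r) / sqrt Nr"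
      using Nr by (intro divide_right_mono) (auto simp: add.assoc[symmetric])
    then show ?thesis by (intro mult_left_mono) auto
  qed
  also have "\<dots> = 8 * sqrt (1 + norm0 V) * cmod (Vhat V (2 * n + l)) / sqrt (real_of_int (2 * n + l))"
    unfolding r_def Nr_def by simp
  finally have bound: "norm (integral {s1..s2} (\<lambda>t. K0 * h t)) \<le> 8 * sqrt (1 + norm0 V) * cmod (Vhat V (2 * n + l)) / sqrt (real_of_int (2 * n + l))" .
  show "let f = (\<lambda>t. l2inner \<phi>
                  (Pm n (adj (U0 t) (Vop V (U0 t (Pnl n l (adj (U0 t) (U t \<psi>))))))))
        in f integrable_on {s1..s2} \<and>
           cmod (integral {s1..s2} f)
             \<le> 8 * sqrt (1 + norm0 V) * cmod (Vhat V (2 * n + l))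
                 / sqrt (real_of_int (2 * n + l))"
    unfolding Let_def feq using fint bound by simp
qed

end
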